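(* Let $l$ be prime. The variety $\mathcal{L}_l$ contains exactly two irreducible Humbert surfaces (those of discriminants $l$ and $4l$) if $l\equiv 1\pmod 4$, and exactly one irreducible Humbert surface (that of discriminant $4l$) otherwise.
   Context: $\mathcal{L}_l\subset\mathcal{A}_2$ is the reduced subvariety of the moduli space of complex principally polarized abelian surfaces consisting of those surfaces admitting an $(l,l)$-isogeny to themselves, where an $(l,l)$-isogeny $f:(A,E)\to(B,E')$ is an isogeny with $E'(f(u),f(v))=lE(u,v)$ and $\ker f\subseteq A[l]$ for the Riemann forms $E,E'$ of the polarizations. The Humbert surface $H_D$ of discriminant $D$ is the (irreducible) locus of principally polarized abelian surfaces whose endomorphism ring contains a copy of the real quadratic order of discriminant $D$ on which the Rosati involution acts trivially; a Humbert surface contained in $\mathcal{L}_l$ means one arising from the action of $\mathbb{Z}[\sqrt{l}]$ by an $(l,l)$-endomorphism $x$ with $x^2=l$, $x'=x$. *)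

theory Defs
  imports "HOL-Analysis.Analysis" "HOL-Library.Numeral_Type"
begin

text \<open>Complex ppav of dimension 2 via the Siegel upper half space: a point tau
  (symmetric 2x2 complex matrix with positive definite imaginary part) gives the
  abelian surface C^2 / Lambda, Lambda = Omega Z^4, Omega = (tau | I), with the
  principal polarization whose Riemann form on Lambda = Z^4 has matrix J.\<close>

definition siegel :: "(complex^2^2) set" where
  "siegel = {tau. (\<forall>i j. tau$i$j = tau$j$i) \<and>
      (\<forall>x::real^2. x \<noteq> 0 \<longrightarrow> (\<Sum>i\<in>UNIV. \<Sum>j\<in>UNIV. x$i * Im (tau$i$j) * x$j) > 0)}"

definition period :: "complex^2^2 \<Rightarrow> complex^4^2" where
  "period tau = (\<chi> i j. if j = 0 then tau$i$0 else if j = 1 then tau$i$1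
                       else if j = 2 then (if i = 0 then 1 else 0)
                       else (if i = 1 then 1 else 0))"

definition Jmat :: "int^4^4" where
  "Jmat = (\<chi> i j. if i = 0 \<and> j = 2 then 1 else if i = 1 \<and> j = 3 then 1
                  else if i = 2 \<and> j = 0 then -1 else if i = 3 \<and> j = 1 then -1 else 0)"

definition cmat :: "int^4^4 \<Rightarrow> complex^4^4" where
  "cmat M = (\<chi> i j. of_int (M$i$j))"

definition rmat :: "int^4^4 \<Rightarrow> real^4^4" where
  "rmat M = (\<chi> i j. of_int (M$i$j))"

definition smat :: "int \<Rightarrow> int^4^4 \<Rightarrow> int^4^4" where
  "smat c M = (\<chi> i j. c * M$i$j)"

text \<open>Endomorphisms of the abelian surface: rational representations M (acting on
  Lambda = Z^4) that are induced by a C-linear map A of C^2.\<close>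
definition End_ab :: "complex^2^2 \<Rightarrow> (int^4^4) set" where
  "End_ab tau = {M. \<exists>A::complex^2^2. A ** period tau = period tau ** cmat M}"

text \<open>Rosati involution of the principal polarization: M' = J^{-1} M^T J (J^{-1} = J^T).\<close>
definition rosati :: "int^4^4 \<Rightarrow> int^4^4" where
  "rosati M = transpose Jmat ** transpose M ** Jmat"

text \<open>(l,l)-isogeny from the surface to itself: an isogeny M (det nonzero) with
  E(Mu,Mv) = l E(u,v) and kernel contained in A[l]. Points of the torus are
  real coordinate vectors x (point Omega x) modulo Z^4.\<close>
definition int_vec :: "real^4 \<Rightarrow> bool" where
  "int_vec v \<longleftrightarrow> (\<forall>i. v$i \<in> \<int>)"

definition ll_endo :: "int \<Rightarrow> complex^2^2 \<Rightarrow> int^4^4 \<Rightarrow> bool" where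
  "ll_endo l tau M \<longleftrightarrow> M \<in> End_ab tau \<and> det M \<noteq> 0 \<and>
      transpose M ** Jmat ** M = smat l Jmat \<and>
      (\<forall>v::real^4. int_vec (rmat M *v v) \<longrightarrow> int_vec (of_int l *\<^sub>R v))"

definition L_var :: "int \<Rightarrow> (complex^2^2) set" where
  "L_var l = {tau \<in> siegel. \<exists>M. ll_endo l tau M}"

definition real_quad_disc :: "int \<Rightarrow> bool" where
  "real_quad_disc D \<longleftrightarrow> D > 0 \<and> (\<nexists>k. D = k * k) \<and> (D mod 4 = 0 \<or> D mod 4 = 1)"

text \<open>Humbert surface H_D: End contains a (primitively embedded) copy of
  O_D = Z[w], w = (D + sqrt D)/2, w^2 = D w - (D^2 - D)/4, on which Rosati is trivial.
  A ring embedding of O_D is the same as an image X of w satisfying that relation.\<close>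
definition humbert :: "int \<Rightarrow> (complex^2^2) set" where
  "humbert D = {tau \<in> siegel. \<exists>X \<in> End_ab tau. rosati X = X \<and>
      X ** X = smat D X - smat ((D*D - D) div 4) (mat 1) \<and>
      (\<forall>Y \<in> End_ab tau. \<forall>k a b. k \<noteq> 0 \<and> smat k Y = smat a (mat 1) + smat b X
            \<longrightarrow> k dvd a \<and> k dvd b)}"

end

theory Submission
  imports Defs
begin


lemma sq_mod4: "(x::int)*x mod 4 = 0 \<or> x*x mod 4 = 1"
proof -
  have "x mod 4 \<in> {0,1,2,3}" by auto
  moreover have "x*x mod 4 = ((x mod 4)*(x mod 4)) mod 4" by (simp add: mod_mult_eq)
  ultimately show ?thesis by auto
qed

lemma nosq_aux: "(k mod 4 = 2 \<or> k mod 4 = 3) \<Longrightarrow> nat \<bar>y\<bar> = N \<Longrightarrow> (x::int)*x = k*(y*y) \<Longrightarrow> y = 0"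
proof (induction N arbitrary: x y rule: less_induct)
  case (less N)
  show ?case
  proof (cases "even y")
    case False
    then have "y mod 4 = 1 \<or> y mod 4 = 3" by presburger
    then have "y*y mod 4 = 1"
    proof
      assume "y mod 4 = 1" then show ?thesis by (metis mod_mult_eq mult_1 mod_mod_trivial)
    next
      assume h: "y mod 4 = 3"
      have "y*y mod 4 = ((y mod 4)*(y mod 4)) mod 4" by (simp add: mod_mult_eq)
      with h show ?thesis by simp
    qed
    then have "k*(y*y) mod 4 = k mod 4" by (metis mod_mult_right_eq mult.right_neutral)
    with less.prems sq_mod4[of x] show ?thesis by auto
  next
    case True
    then obtain y' where y': "y = 2*y'" by blast
    have "even (x*x)" using less.prems(3) y' by simp
    then have "even x" by simp
    then obtain x' where x': "x = 2*x'" by blast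
    have e: "x'*x' = k*(y'*y')" using less.prems(3) x' y' by (simp add: algebra_simps)
    show ?thesis
    proof (cases "y = 0")
      case False
      then have "nat \<bar>y'\<bar> < N" using less.prems(2) y' by auto
      from less.IH[OF this less.prems(1) refl e] y' show ?thesis by simp
    qed simp
  qed
qed

lemma nosq: "(k mod 4 = 2 \<or> k mod 4 = 3) \<Longrightarrow> (x::int)*x = k*(y*y) \<Longrightarrow> y = 0"
  using nosq_aux by blast

lemma sqrt_irr: assumes "k mod 4 = 2 \<or> k mod 4 = 3" "k > 0" "real_of_int d * sqrt (of_int k) = of_int N"
  shows "d = 0"
proof -
  have "(real_of_int d * sqrt (of_int k))^2 = (of_int N)^2" using assms(3) by simp
  then have "real_of_int (d*d*k) = of_int (N*N)" using assms(2) by (simp add: power2_eq_square algebra_simps)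
  then have "N*N = k*(d*d)" by (simp only: of_int_eq_iff) (simp add: algebra_simps)
  from nosq[OF assms(1) this] show ?thesis .
qed

lemma indep2: "real_of_int a + of_int b * sqrt 2 = 0 \<Longrightarrow> a = 0 \<and> b = 0"
  using sqrt_irr[of 2 b "-a"] by auto

lemma indep3: assumes "real_of_int a + of_int b * sqrt 2 + of_int c * sqrt 3 = 0"
  shows "a = 0 \<and> b = 0 \<and> c = 0"
proof -
  have h: "of_int b * sqrt 2 + of_int c * sqrt 3 = - real_of_int a" using assms by simp
  have "(of_int b * sqrt 2 + of_int c * sqrt 3)^2 = (real_of_int a)^2" using h by simp
  then have "2*b*b + 3*c*c + 2 * of_int (b*c) * (sqrt 2 * sqrt 3) = (real_of_int (a*a))"
    by (simp add: power2_eq_square algebra_simps)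
  moreover have "sqrt 2 * sqrt 3 = sqrt (of_int 6)" by (simp add: real_sqrt_mult[symmetric])
  ultimately have "real_of_int (2*b*c) * sqrt (of_int 6) = of_int (a*a - 2*b*b - 3*c*c)"
    by (simp add: algebra_simps)
  from sqrt_irr[OF _ _ this] have "b*c = 0" by simp
  then consider "b = 0" | "c = 0" by auto
  then show ?thesis
  proof cases
    case 1
    with assms have "real_of_int c * sqrt (of_int 3) = of_int (-a)" by simp
    from sqrt_irr[OF _ _ this] 1 assms show ?thesis by simp
  next
    case 2
    with assms indep2 2 show ?thesis by simp
  qed
qed

definition qq :: complex where "qq = complex_of_real (sqrt 2)"
definition uu :: real where "uu = sqrt (sqrt 3)"
definition rr :: complex where "rr = \<i> * complex_of_real uu"

lemma uu_pos: "uu > 0" by (simp add: uu_def)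
lemma uu_sq: "uu * uu = sqrt 3" by (simp add: uu_def)

lemma coef: fixes c00 c10 c01 c20 c11 c02 :: int
  assumes "of_int c00 + of_int c10 * qq + of_int c01 * rr + of_int c20 * qq^2 + of_int c11 * (qq*rr) + of_int c02 * rr^2 = 0"
  shows "c00 + 2*c20 = 0 \<and> c10 = 0 \<and> c01 = 0 \<and> c11 = 0 \<and> c02 = 0"
proof -
  let ?L = "of_int c00 + of_int c10 * qq + of_int c01 * rr + of_int c20 * qq^2 + of_int c11 * (qq*rr) + of_int c02 * rr^2"
  have re: "Re ?L = of_int (c00 + 2*c20) + of_int c10 * sqrt 2 + of_int (-c02) * sqrt 3"
    by (simp add: qq_def rr_def power2_eq_square uu_sq[symmetric])
  have im: "Im ?L = uu * (of_int c01 + of_int c11 * sqrt 2)"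
    by (simp add: qq_def rr_def power2_eq_square algebra_simps)
  from re assms have "real_of_int (c00 + 2*c20) + of_int c10 * sqrt 2 + of_int (-c02) * sqrt 3 = 0" by simp
  from indep3[OF this] have 1: "c00 + 2*c20 = 0 \<and> c10 = 0 \<and> c02 = 0" by simp
  from im assms uu_pos have "real_of_int c01 + of_int c11 * sqrt 2 = 0" by simp
  from indep2[OF this] 1 show ?thesis by simp
qed


lemma UNIV4: "(UNIV::4 set) = {0,1,2,3}"
proof -
  have "(4::4) = 0" by simp
  then show ?thesis using UNIV_4 by auto
qed
lemma UNIV2: "(UNIV::2 set) = {0,1}"
proof -
  have "(2::2) = 0" by simp
  then show ?thesis using UNIV_2 by auto
qed
lemma sum2': "(\<Sum>i\<in>(UNIV::2 set). f i) = f 0 + f 1"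
  unfolding UNIV2 by simp
lemma sum4': "(\<Sum>i\<in>(UNIV::4 set). f i) = f 0 + f 1 + f 2 + f 3"
  unfolding UNIV4 by (simp add: ac_simps)
lemma all4: "(\<forall>i::4. P i) \<longleftrightarrow> P 0 \<and> P 1 \<and> P 2 \<and> P 3"
  by (metis UNIV4 UNIV_I insertE singletonD insertI1 insertI2)
lemma all2: "(\<forall>i::2. P i) \<longleftrightarrow> P 0 \<and> P 1"
  by (metis UNIV2 UNIV_I insertE singletonD)

definition tauD :: "int \<Rightarrow> int \<Rightarrow> complex^2^2" where
  "tauD n b = (\<chi> i j. if i = 0 \<and> j = 0 then of_int n * rr - of_int b * qq else if i = 1 \<and> j = 1 then rr else qq)"

definition Mform :: "int \<Rightarrow> int \<Rightarrow> int \<Rightarrow> int \<Rightarrow> int^4^4" where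
  "Mform n b a c = (\<chi> i j. if (i = 0 \<and> j = 0) \<or> (i = 2 \<and> j = 2) then a
     else if (i = 0 \<and> j = 1) \<or> (i = 3 \<and> j = 2) then c
     else if (i = 1 \<and> j = 0) \<or> (i = 2 \<and> j = 3) then n * c
     else if (i = 1 \<and> j = 1) \<or> (i = 3 \<and> j = 3) then a + b * c else 0)"

lemmas msimps = matrix_matrix_mult_def sum2' sum4' period_def cmat_def tauD_def

lemma End_char:
  assumes n: "n \<ge> 1" and M: "M \<in> End_ab (tauD n b)"
  shows "M = Mform n b (M$0$0) (M$0$1)"
proof -
  obtain A where hA: "A ** period (tauD n b) = period (tauD n b) ** cmat M"
    using M unfolding End_ab_def by auto
  have h: "(A ** period (tauD n b))$i$j = (period (tauD n b) ** cmat M)$i$j" for i j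
    using hA by simp
  have A00: "A$0$0 = (of_int n*rr - of_int b*qq) * of_int (M$0$2) + qq * of_int (M$1$2) + of_int (M$2$2)"
    using h[of 0 2] by (simp add: msimps)
  have A01: "A$0$1 = (of_int n*rr - of_int b*qq) * of_int (M$0$3) + qq * of_int (M$1$3) + of_int (M$2$3)"
    using h[of 0 3] by (simp add: msimps)
  have A10: "A$1$0 = qq * of_int (M$0$2) + rr * of_int (M$1$2) + of_int (M$3$2)"
    using h[of 1 2] by (simp add: msimps)
  have A11: "A$1$1 = qq * of_int (M$0$3) + rr * of_int (M$1$3) + of_int (M$3$3)"
    using h[of 1 3] by (simp add: msimps)
  have e00: "of_int ((-1)*M$2$0) + of_int (b*M$0$0 + (-1)*b*M$2$2 + (-1)*M$1$0 + M$2$3) * qq + of_int ((-1)*M$0$0*n + M$2$2*n) * rr + of_int ((-1)*b*M$0$3 + (-1)*b*M$1$2 + b*b*M$0$2 + M$1$3) * qq^2 + of_int ((-2)*b*M$0$2*n + M$0$3*n + M$1$2*n) * (qq*rr) + of_int (M$0$2*n*n) * rr^2 = 0"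
  proof -
    have "(A ** period (tauD n b))$0$0 - (period (tauD n b) ** cmat M)$0$0 = 0" using h[of 0 0] by simp
    then show ?thesis
      apply (simp add: msimps A00 A01 A10 A11 del: of_int_mult of_int_add of_int_diff of_int_minus)
      apply (simp only: of_int_mult of_int_add of_int_diff of_int_minus of_int_numeral of_int_neg_numeral of_int_1 of_int_0)
      by algebra
  qed
  have e01: "of_int ((-1)*M$2$1) + of_int (b*M$0$1 + (-1)*M$1$1 + M$2$2) * qq + of_int ((-1)*M$0$1*n + M$2$3) * rr + of_int ((-1)*b*M$0$2 + M$1$2) * qq^2 + of_int ((-1)*b*M$0$3 + M$0$2*n + M$1$3) * (qq*rr) + of_int (M$0$3*n) * rr^2 = 0"
  proof -
    have "(A ** period (tauD n b))$0$1 - (period (tauD n b) ** cmat M)$0$1 = 0" using h[of 0 1] by simp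
    then show ?thesis
      apply (simp add: msimps A00 A01 A10 A11 del: of_int_mult of_int_add of_int_diff of_int_minus)
      apply (simp only: of_int_mult of_int_add of_int_diff of_int_minus of_int_numeral of_int_neg_numeral of_int_1 of_int_0)
      by algebra
  qed
  have e10: "of_int ((-1)*M$3$0) + of_int ((-1)*b*M$3$2 + (-1)*M$0$0 + M$3$3) * qq + of_int ((-1)*M$1$0 + M$3$2*n) * rr + of_int ((-1)*b*M$0$2 + M$0$3) * qq^2 + of_int ((-1)*b*M$1$2 + M$0$2*n + M$1$3) * (qq*rr) + of_int (M$1$2*n) * rr^2 = 0"
  proof -
    have "(A ** period (tauD n b))$1$0 - (period (tauD n b) ** cmat M)$1$0 = 0" using h[of 1 0] by simp
    then show ?thesis
      apply (simp add: msimps A00 A01 A10 A11 del: of_int_mult of_int_add of_int_diff of_int_minus)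
      apply (simp only: of_int_mult of_int_add of_int_diff of_int_minus of_int_numeral of_int_neg_numeral of_int_1 of_int_0)
      by algebra
  qed
  have e11: "of_int ((-1)*M$3$1) + of_int ((-1)*M$0$1 + M$3$2) * qq + of_int ((-1)*M$1$1 + M$3$3) * rr + of_int (M$0$2) * qq^2 + of_int (M$0$3 + M$1$2) * (qq*rr) + of_int (M$1$3) * rr^2 = 0"
  proof -
    have "(A ** period (tauD n b))$1$1 - (period (tauD n b) ** cmat M)$1$1 = 0" using h[of 1 1] by simp
    then show ?thesis
      apply (simp add: msimps A00 A01 A10 A11 del: of_int_mult of_int_add of_int_diff of_int_minus)
      apply (simp only: of_int_mult of_int_add of_int_diff of_int_minus of_int_numeral of_int_neg_numeral of_int_1 of_int_0)
      by algebra
  qed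
  note c00 = coef[OF e00] and c01 = coef[OF e01] and c10 = coef[OF e10] and c11 = coef[OF e11]
  have n0: "n \<noteq> 0" using n by simp
  have z12: "M$1$2 = 0" using c10 n0 by simp
  have z13: "M$1$3 = 0" using c11 by simp
  have z03: "M$0$3 = 0" using c11 z12 by simp
  have z02: "M$0$2 = 0" using c10 z12 z13 n0 by simp
  have z31: "M$3$1 = 0" using c11 z02 by simp
  have z30: "M$3$0 = 0" using c10 z02 z03 by simp
  have z21: "M$2$1 = 0" using c01 z02 z12 by simp
  have z20: "M$2$0 = 0" using c00 z02 z03 z12 z13 by simp
  have e22: "M$2$2 = M$0$0" using c00 n0 by (simp add: algebra_simps)
  have e32: "M$3$2 = M$0$1" using c11 by simp
  have e10: "M$1$0 = n * M$0$1" using c10 e32 by (simp add: algebra_simps)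
  have e23: "M$2$3 = n * M$0$1" using c01 by (simp add: algebra_simps)
  have e33: "M$3$3 = M$0$0 + b * M$0$1" using c10 e32 by (simp add: algebra_simps)
  have e11: "M$1$1 = M$0$0 + b * M$0$1" using c01 e22 by (simp add: algebra_simps)
  show ?thesis
    unfolding vec_eq_iff all4 Mform_def
    using z12 z13 z03 z02 z31 z30 z21 z20 e22 e32 e10 e23 e33 e11 by simp
qed


definition lin :: "int \<Rightarrow> int \<Rightarrow> int^4^4 \<Rightarrow> int^4^4" where
  "lin s t X = smat s X + smat t (mat 1)"

lemma lin_entry: "lin s t X $ i $ j = s * X$i$j + (if i = j then t else 0)"
  by (simp add: lin_def smat_def mat_def)

lemma lin_End: assumes "X \<in> End_ab tau" shows "lin s t X \<in> End_ab tau"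
proof -
  obtain A where hA: "A ** period tau = period tau ** cmat X" using assms unfolding End_ab_def by auto
  define B :: "complex^2^2" where "B = (\<chi> i j. of_int s * A$i$j + (if i = j then of_int t else 0))"
  have 1: "B ** period tau = (\<chi> i j. of_int s * (A ** period tau)$i$j + of_int t * period tau $i$j)"
    by (simp add: vec_eq_iff all2 B_def matrix_matrix_mult_def sum2' algebra_simps)
  have 2: "period tau ** cmat (lin s t X) = (\<chi> i j. of_int s * (period tau ** cmat X)$i$j + of_int t * period tau $i$j)"
    by (simp add: vec_eq_iff all2 all4 cmat_def lin_entry matrix_matrix_mult_def sum4' algebra_simps)
  show ?thesis unfolding End_ab_def using 1 2 hA by auto
qed

lemma rosati_lin: "rosati (lin s t X) = lin s t (rosati X)"
  by (simp add: vec_eq_iff all4 rosati_def lin_entry matrix_matrix_mult_def sum4' Jmat_def transpose_def)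

lemma lin_sq: "lin s t X ** lin s t X = lin (s * s) 0 (X ** X) + lin (2 * s * t) (t * t) X"
  by (simp add: vec_eq_iff all4 lin_entry matrix_matrix_mult_def sum4' algebra_simps)

lemma JJt: "Jmat ** transpose Jmat = mat 1"
  by (simp add: vec_eq_iff all4 matrix_matrix_mult_def transpose_def Jmat_def sum4' mat_def)

lemma smat_mat1: "smat l (mat 1) = mat l"
  by (simp add: vec_eq_iff smat_def mat_def)

lemma det_mat4: "det (mat l :: int^4^4) = l^4"
proof -
  have "det (mat l :: int^4^4) = prod (\<lambda>i. (mat l :: int^4^4)$i$i) UNIV"
    by (rule det_diagonal) (simp add: mat_def)
  also have "\<dots> = l^4" by (simp add: mat_def)
  finally show ?thesis .
qed

lemma rmat_mult: "rmat (A ** B) = rmat A ** rmat B"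
  by (simp add: vec_eq_iff rmat_def matrix_matrix_mult_def)

lemma rmat_mat: "rmat (mat l) *v v = of_int l *\<^sub>R v"
  by (simp add: vec_eq_iff all4 rmat_def mat_def matrix_vector_mult_def sum4')

lemma int_vec_mult: "int_vec w \<Longrightarrow> int_vec (rmat Y *v w)"
  unfolding int_vec_def matrix_vector_mult_def rmat_def
  by (auto intro!: Ints_sum Ints_mult)

lemma J_mat: "Jmat ** mat l = smat l Jmat"
  by (simp add: vec_eq_iff all4 matrix_matrix_mult_def mat_def smat_def Jmat_def sum4')

lemma ll_from_sq:
  assumes End: "Y \<in> End_ab tau" and ros: "rosati Y = Y" and sq: "Y ** Y = mat l" and l0: "l \<noteq> 0"
  shows "ll_endo l tau Y"
proof -
  have "det Y * det Y = l^4" using sq det_mul[of Y Y] det_mat4 by simp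
  then have d: "det Y \<noteq> 0" using l0 by auto
  have "transpose Y ** Jmat = Jmat ** Y"
  proof -
    have "Jmat ** Y = Jmat ** (transpose Jmat ** transpose Y ** Jmat)" using ros by (simp add: rosati_def)
    also have "\<dots> = (Jmat ** transpose Jmat) ** transpose Y ** Jmat" by (simp add: matrix_mul_assoc)
    also have "\<dots> = transpose Y ** Jmat" by (simp add: JJt)
    finally show ?thesis by simp
  qed
  then have t: "transpose Y ** Jmat ** Y = smat l Jmat"
    by (metis J_mat matrix_mul_assoc sq)
  have k: "int_vec (of_int l *\<^sub>R v)" if "int_vec (rmat Y *v v)" for v
  proof -
    have "rmat Y *v (rmat Y *v v) = of_int l *\<^sub>R v"
      by (simp add: matrix_vector_mul_assoc rmat_mult[symmetric] sq rmat_mat)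
    with int_vec_mult[OF that, of Y] show ?thesis by simp
  qed
  show ?thesis unfolding ll_endo_def using End d t k by blast
qed

lemma easy_core:
  assumes X: "X \<in> End_ab tau" and ros: "rosati X = X"
    and sq: "X ** X = smat D X - smat K (mat 1)"
    and e1: "s * s * D + 2 * s * t = 0" and e2: "t * t - s * s * K = l" and l0: "l \<noteq> 0"
  shows "\<exists>M. ll_endo l tau M"
proof -
  let ?Y = "lin s t X"
  have "?Y ** ?Y = mat l"
  proof -
    have "(?Y ** ?Y)$i$j = (mat l :: int^4^4)$i$j" for i j
    proof -
      have "(?Y ** ?Y)$i$j = s * s * (X ** X)$i$j + (2 * s * t * X$i$j + (if i = j then t * t else 0))"
        unfolding lin_sq by (simp add: lin_entry)
      also have "\<dots> = (s * s * D + 2 * s * t) * X$i$j + (if i = j then t * t - s * s * K else 0)"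
      proof -
        have "(X ** X)$i$j = (smat D X - smat K (mat 1))$i$j" using sq by simp
        then have xx: "(X ** X)$i$j = D * X$i$j - (if i = j then K else 0)" by (simp add: smat_def mat_def)
        show ?thesis unfolding xx by (cases "i = j") (simp_all add: algebra_simps)
      qed
      also have "\<dots> = (mat l :: int^4^4)$i$j" using e1 e2 by (simp add: mat_def)
      finally show ?thesis .
    qed
    then show ?thesis by (simp add: vec_eq_iff)
  qed
  moreover have "rosati ?Y = ?Y" by (simp add: rosati_lin ros)
  moreover have "?Y \<in> End_ab tau" by (rule lin_End[OF X])
  ultimately show ?thesis using ll_from_sq l0 by blast
qed



lemma easy:
  assumes tau: "tau \<in> humbert D" and D: "(D = l \<and> l mod 4 = 1) \<or> D = 4 * l" and l0: "l \<noteq> 0"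
  shows "tau \<in> L_var l"
proof -
  obtain X where si: "tau \<in> siegel" and X: "X \<in> End_ab tau" "rosati X = X"
    "X ** X = smat D X - smat ((D*D - D) div 4) (mat 1)"
    using tau unfolding humbert_def by auto
  from D have "\<exists>M. ll_endo l tau M"
  proof
    assume h: "D = l \<and> l mod 4 = 1"
    then obtain k where k: "l = 4 * k + 1" by (metis div_mult_mod_eq add.commute mult.commute)
    have "(D*D - D) div 4 = 4*k*k + k" using h k by (simp add: algebra_simps)
    then show ?thesis using easy_core[OF X, of 2 "-l" l] h k l0 by (simp add: algebra_simps)
  next
    assume h: "D = 4 * l"
    have "(D*D - D) div 4 = 4*l*l - l" using h by (simp add: algebra_simps)
    then show ?thesis using easy_core[OF X, of 1 "-2*l" l] h l0 by (simp add: algebra_simps)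
  qed
  with si show ?thesis unfolding L_var_def by blast
qed

lemma tau_siegel: assumes n: "n \<ge> 1" shows "tauD n b \<in> siegel"
proof -
  have sym: "\<forall>i j. tauD n b $i$j = tauD n b $j$i" by (simp add: all2 tauD_def)
  have pos: "(\<Sum>i\<in>UNIV. \<Sum>j\<in>UNIV. x$i * Im (tauD n b $i$j) * x$j) > 0" if "x \<noteq> 0" for x :: "real^2"
  proof -
    have "x$0 \<noteq> 0 \<or> x$1 \<noteq> 0" using that by (auto simp: vec_eq_iff all2)
    moreover have "x$0 * x$0 * n \<ge> 0" using n by simp
    moreover have "x$1 * x$1 \<ge> 0" by simp
    moreover have "x$0 \<noteq> 0 \<Longrightarrow> x$0 * x$0 * n > 0" using n by (auto simp: zero_less_mult_iff)
    moreover have "x$1 \<noteq> 0 \<Longrightarrow> x$1 * x$1 > 0" by (auto simp: zero_less_mult_iff)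
    ultimately have "x$0 * x$0 * n + x$1 * x$1 > 0" by linarith
    then have "(x$0 * x$0 * n + x$1 * x$1) * uu > 0" using uu_pos by simp
    moreover have "(\<Sum>i\<in>UNIV. \<Sum>j\<in>UNIV. x$i * Im (tauD n b $i$j) * x$j) = (x$0 * x$0 * n + x$1 * x$1) * uu"
      by (simp add: sum2' tauD_def qq_def rr_def algebra_simps)
    ultimately show ?thesis by simp
  qed
  show ?thesis unfolding siegel_def using sym pos by blast
qed

lemma Mform_End: "Mform n b a c \<in> End_ab (tauD n b)"
proof -
  define A :: "complex^2^2" where "A = (\<chi> i j. if i = 0 \<and> j = 0 then of_int a else if i = 0 \<and> j = 1 then of_int (n*c)
      else if i = 1 \<and> j = 0 then of_int c else of_int (a + b*c))"
  have "A ** period (tauD n b) = period (tauD n b) ** cmat (Mform n b a c)"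
    unfolding vec_eq_iff all2 all4
    by (simp add: msimps A_def Mform_def algebra_simps)
  then show ?thesis unfolding End_ab_def by blast
qed

lemma rosati_Mform: "rosati (Mform n b a c) = Mform n b a c"
  by (simp add: vec_eq_iff all4 rosati_def Mform_def matrix_matrix_mult_def sum4' Jmat_def transpose_def)

lemma Mform_sq: assumes "b * b = b"
  shows "Mform n b (2*n) 1 ** Mform n b (2*n) 1 = smat (4*n+b) (Mform n b (2*n) 1) - smat (((4*n+b)*(4*n+b) - (4*n+b)) div 4) (mat 1)"
proof -
  have "((4*n+b)*(4*n+b) - (4*n+b)) = 4 * (4*n*n + 2*n*b - n)" using assms by (simp add: algebra_simps)
  then have K: "((4*n+b)*(4*n+b) - (4*n+b)) div 4 = 4*n*n + 2*n*b - n" by simp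
  show ?thesis unfolding K using assms
    by (simp add: vec_eq_iff all4 Mform_def matrix_matrix_mult_def sum4' smat_def mat_def algebra_simps)
qed

lemma Mform_J: "(transpose (Mform n b a c) ** Jmat ** Mform n b a c)$0$2 = a*a + n*c*c"
  "(transpose (Mform n b a c) ** Jmat ** Mform n b a c)$0$3 = n*c*(2*a + b*c)"
  by (simp_all add: Mform_def matrix_matrix_mult_def sum4' Jmat_def transpose_def algebra_simps)

lemma smatJ: "smat l Jmat $0$2 = l" "smat l Jmat $0$3 = 0"
  by (simp_all add: smat_def Jmat_def)



lemma tau_humbert:
  assumes n: "n \<ge> 1" and b: "b * b = b"
  shows "tauD n b \<in> humbert (4*n+b)"
proof -
  let ?X = "Mform n b (2*n) 1"
  have prim: "\<forall>Y \<in> End_ab (tauD n b). \<forall>k a b'. k \<noteq> 0 \<and> smat k Y = smat a (mat 1) + smat b' ?X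
      \<longrightarrow> k dvd a \<and> k dvd b'"
  proof (intro ballI allI impI)
    fix Y k a b' assume Y: "Y \<in> End_ab (tauD n b)" and h: "k \<noteq> 0 \<and> smat k Y = smat a (mat 1) + smat b' ?X"
    have YM: "Y = Mform n b (Y$0$0) (Y$0$1)" by (rule End_char[OF n Y])
    have e01: "(smat k Y)$0$1 = (smat a (mat 1) + smat b' ?X)$0$1" using h by simp
    have e00: "(smat k Y)$0$0 = (smat a (mat 1) + smat b' ?X)$0$0" using h by simp
    from e01 have 1: "k * Y$0$1 = b'" by (simp add: smat_def mat_def Mform_def)
    from e00 have 2: "k * Y$0$0 = a + b' * (2*n)" by (simp add: smat_def mat_def Mform_def)
    have "a = k * (Y$0$0 - Y$0$1 * (2*n))" using 1 2 by (simp add: algebra_simps)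
    then show "k dvd a \<and> k dvd b'" using 1 by auto
  qed
  show ?thesis unfolding humbert_def
    using tau_siegel[OF n] Mform_End[of n b "2*n" 1] rosati_Mform[of n b "2*n" 1] Mform_sq[OF b, of n] prim
    by blast
qed

lemma prime_not_sq: assumes "prime (l::int)" shows "x * x \<noteq> l"
proof
  assume h: "x * x = l"
  have l1: "l > 1" using assms prime_gt_1_int by blast
  have "\<bar>x\<bar> dvd l" using h by (metis abs_dvd_iff dvd_triv_left)
  then have "\<bar>x\<bar> = 1 \<or> \<bar>x\<bar> = l" using assms by (simp add: prime_int_iff)
  then show False
  proof
    assume "\<bar>x\<bar> = 1" then have "x * x = 1" by (metis abs_mult abs_mult_self_eq mult_1)
    with h l1 show False by simp
  next
    assume "\<bar>x\<bar> = l" then have "x * x = l * l" by (metis abs_mult_self_eq)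
    with h l1 show False by simp
  qed
qed

lemma sq_dvd_prime: assumes "prime (l::int)" "x * x dvd l" shows "x * x = 1"
proof -
  have "x * x \<ge> 0" by simp
  then have "x * x = 1 \<or> x * x = l" using assms by (simp add: prime_int_iff)
  then show ?thesis using prime_not_sq[OF assms(1)] by blast
qed

lemma nt:
  assumes l: "prime (l::int)" and n: "n \<ge> 1" and b: "b = 0 \<or> b = 1"
    and e1: "a*a + n*c*c = l" and e2: "n*c*(2*a + b*c) = 0"
  shows "(b = 0 \<and> n = l) \<or> (b = 1 \<and> 4*n+1 = l)"
proof -
  have c: "c \<noteq> 0"
  proof
    assume "c = 0" with e1 prime_not_sq[OF l, of a] show False by simp
  qed
  with e2 n have e3: "2*a + b*c = 0" by simp
  from b show ?thesis
  proof
    assume b0: "b = 0"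
    with e3 have "a = 0" by simp
    with e1 have "(c*c) * n = l" by (simp add: algebra_simps)
    then have "c * c dvd l" by (metis dvd_triv_left)
    then have "c * c = 1" by (rule sq_dvd_prime[OF l])
    with \<open>(c*c) * n = l\<close> b0 show ?thesis by simp
  next
    assume b1: "b = 1"
    with e3 have "c = -2*a" by simp
    with e1 have "(a*a) * (4*n+1) = l" by (simp add: algebra_simps)
    then have "a * a dvd l" by (metis dvd_triv_left)
    then have "a * a = 1" by (rule sq_dvd_prime[OF l])
    with \<open>(a*a) * (4*n+1) = l\<close> b1 show ?thesis by simp
  qed
qed

theorem corollary4p2:
  fixes l :: int
  assumes "prime l"
  shows "{D. real_quad_disc D \<and> humbert D \<subseteq> L_var l} =
         (if l mod 4 = 1 then {l, 4 * l} else {4 * l})"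
proof -
  have l1: "l > 1" using assms prime_gt_1_int by blast
  have iff: "real_quad_disc D \<and> humbert D \<subseteq> L_var l \<longleftrightarrow> (D = l \<and> l mod 4 = 1) \<or> D = 4 * l" for D
  proof
    assume h: "real_quad_disc D \<and> humbert D \<subseteq> L_var l"
    define b where "b = D mod 4"
    define n where "n = D div 4"
    have D: "D = 4*n + b" unfolding b_def n_def by simp
    have b01: "b = 0 \<or> b = 1" using h unfolding real_quad_disc_def b_def by auto
    have bb: "b * b = b" using b01 by auto
    have n1: "n \<ge> 1"
    proof (rule ccontr)
      assume "\<not> n \<ge> 1"
      moreover have "D > 0" using h by (simp add: real_quad_disc_def)
      moreover have "\<not> (\<exists>k. D = k * k)" using h by (simp add: real_quad_disc_def)
      ultimately have "D = 1" using D b01 by auto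
      then have "D = 1 * 1" by simp
      with \<open>\<not> (\<exists>k. D = k * k)\<close> show False by blast
    qed
    have "tauD n b \<in> L_var l" using tau_humbert[OF n1 bb] h D by auto
    then obtain M where M: "ll_endo l (tauD n b) M" unfolding L_var_def by auto
    then have ME: "M \<in> End_ab (tauD n b)" and MJ: "transpose M ** Jmat ** M = smat l Jmat"
      unfolding ll_endo_def by auto
    obtain a c where MF: "M = Mform n b a c" using End_char[OF n1 ME] by blast
    have MJ': "transpose (Mform n b a c) ** Jmat ** Mform n b a c = smat l Jmat" using MJ MF by simp
    have e1: "a * a + n * c * c = l"
      using arg_cong[OF MJ', of "\<lambda>X. X$0$2"] by (simp only: Mform_J smatJ)
    have e2: "n * c * (2 * a + b * c) = 0"
      using arg_cong[OF MJ', of "\<lambda>X. X$0$3"] by (simp only: Mform_J smatJ)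
    from nt[OF assms n1 b01 e1 e2] D show "(D = l \<and> l mod 4 = 1) \<or> D = 4 * l" by auto
  next
    assume h: "(D = l \<and> l mod 4 = 1) \<or> D = 4 * l"
    have "real_quad_disc D"
      using h
    proof
      assume h1: "D = l \<and> l mod 4 = 1"
      then show ?thesis using l1 prime_not_sq[OF assms] unfolding real_quad_disc_def by auto
    next
      assume h2: "D = 4 * l"
      have "\<not> (\<exists>k. D = k * k)"
      proof
        assume "\<exists>k. D = k * k"
        then obtain k where k: "4 * l = k * k" using h2 by auto
        have "k * k = 2 * (2 * l)" using k by simp
        then have "even (k * k)" by (metis dvd_triv_left)
        then have "even k" by simp
        then obtain k' where "k = 2 * k'" by blast
        with k have "l = k' * k'" by simp
        with prime_not_sq[OF assms] show False by metis
      qed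
      then show ?thesis using h2 l1 unfolding real_quad_disc_def by auto
    qed
    moreover have "humbert D \<subseteq> L_var l" using easy[OF _ h] l1 by auto
    ultimately show "real_quad_disc D \<and> humbert D \<subseteq> L_var l" by simp
  qed
  show ?thesis using iff by auto
qed


end
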